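(* Let $X$ be as in the standing setting with skeleton $X_1,\dots,X_k$. If $x\in X$ does not lie in $\operatorname{span}X_i$ for any $i$, then there exist indices $i\ne j$ and points $x_i\in X_i$, $x_j\in X_j$ such that $x\in\operatorname{pos}\{x_i,x_j\}$.
   Context: Standing setting: $X\subset\mathbb R^n\setminus\{0\}$ is a finite set such that $0$ lies in the interior of $\operatorname{conv}X$, no element of $X$ is a positive multiple of another, and every $n+1$ points of $X$ are in good position. A finite set $A$ is in conical position if $0\notin\operatorname{conv}A$ and no point of $A$ lies in the positive hull (set of nonnegative linear combinations, denoted $\operatorname{pos}$) of the other points; it is in good position otherwise. A skeleton of $X$ is a collection of pairwise disjoint subsets $X_1,\dots,X_k\subseteq X$ such that each $X_i$ is the vertex set of a simplex whose relative interior contains $0$ and $\mathbb R^n=\operatorname{span}X_1\oplus\cdots\oplus\operatorname{span}X_k$. *)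

theory Defs
  imports "HOL-Analysis.Analysis"
begin

definition pos :: "'a::real_vector set \<Rightarrow> 'a set" where
  "pos A = {v. \<exists>c. (\<forall>a\<in>A. c a \<ge> 0) \<and> v = (\<Sum>a\<in>A. c a *\<^sub>R a)}"

definition conical_position :: "'a::real_vector set \<Rightarrow> bool" where
  "conical_position A \<longleftrightarrow> 0 \<notin> convex hull A \<and> (\<forall>a\<in>A. a \<notin> pos (A - {a}))"

definition good_position :: "'a::real_vector set \<Rightarrow> bool" where
  "good_position A \<longleftrightarrow> \<not> conical_position A"

definition standing_setting :: "'a::euclidean_space set \<Rightarrow> bool" where
  "standing_setting X \<longleftrightarrow>
     finite X \<and> 0 \<notin> X \<and> 0 \<in> interior (convex hull X) \<and>
     (\<forall>x\<in>X. \<forall>y\<in>X. x \<noteq> y \<longrightarrow> \<not> (\<exists>c::real. c > 0 \<and> y = c *\<^sub>R x)) \<and>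
     (\<forall>A. A \<subseteq> X \<and> card A = DIM('a) + 1 \<longrightarrow> good_position A)"

definition direct_sum_UNIV :: "nat \<Rightarrow> (nat \<Rightarrow> 'a::real_vector set) \<Rightarrow> bool" where
  "direct_sum_UNIV k V \<longleftrightarrow>
     (\<forall>v. \<exists>!f. (\<forall>i<k. f i \<in> V i) \<and> (\<forall>i\<ge>k. f i = 0) \<and> v = (\<Sum>i<k. f i))"

definition skeleton :: "'a::euclidean_space set \<Rightarrow> nat \<Rightarrow> (nat \<Rightarrow> 'a set) \<Rightarrow> bool" where
  "skeleton X k Xs \<longleftrightarrow>
     (\<forall>i<k. Xs i \<subseteq> X) \<and>
     (\<forall>i<k. \<forall>j<k. i \<noteq> j \<longrightarrow> Xs i \<inter> Xs j = {}) \<and>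
     (\<forall>i<k. Xs i \<noteq> {} \<and> \<not> affine_dependent (Xs i) \<and> 0 \<in> rel_interior (convex hull (Xs i))) \<and>
     direct_sum_UNIV k (\<lambda>i. span (Xs i))"

end

theory Submission imports Defs begin
lemma indep_coeff:
  fixes C :: "'a::real_vector set"
  assumes "finite C" "independent C" "(\<Sum>c\<in>C. a c *\<^sub>R c) = (\<Sum>c\<in>C. b c *\<^sub>R c)" "c\<in>C"
  shows "a c = b c"
proof (rule ccontr)
  assume ne: "a c \<noteq> b c"
  have "(\<Sum>c\<in>C. (a c - b c) *\<^sub>R c) = 0"
    using assms(3) by (simp add: scaleR_diff_left sum_subtractf)
  then have "dependent C" using ne assms(4) dependent_finite[OF assms(1)]
    by (metis right_minus_eq)
  with assms(2) show False by simp
qed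

lemma conical_L:
  fixes C :: "'a::real_vector set"
  assumes fin: "finite C" and ind: "independent C" and xC: "x \<notin> C"
    and xs: "x = (\<Sum>c\<in>C. u c *\<^sub>R c)"
    and c1: "c1 \<in> C" "u c1 > 0" and c2: "c2 \<in> C" "u c2 > 0" "c1 \<noteq> c2"
    and c3: "c3 \<in> C" "u c3 < 0"
  shows "conical_position (insert x C)"
  unfolding conical_position_def
proof (intro conjI ballI)
  show "0 \<notin> convex hull insert x C"
  proof
    assume "0 \<in> convex hull insert x C"
    then obtain w where w: "\<forall>a\<in>insert x C. 0 \<le> w a" "sum w (insert x C) = 1"
      "(\<Sum>a\<in>insert x C. w a *\<^sub>R a) = 0"
      using convex_hull_finite[of "insert x C"] fin by auto
    have "(\<Sum>a\<in>insert x C. w a *\<^sub>R a) = w x *\<^sub>R x + (\<Sum>c\<in>C. w c *\<^sub>R c)"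
      using fin xC by simp
    also have "\<dots> = (\<Sum>c\<in>C. (w x * u c + w c) *\<^sub>R c)"
      by (simp add: xs scaleR_sum_right sum.distrib scaleR_add_left)
    finally have eq: "(\<Sum>c\<in>C. (w x * u c + w c) *\<^sub>R c) = (\<Sum>c\<in>C. (0::real) *\<^sub>R c)"
      using w(3) by simp
    have e: "\<And>c. c \<in> C \<Longrightarrow> w x * u c + w c = 0"
      using indep_coeff[OF fin ind eq] by blast
    have "w x * u c1 \<le> 0" using e[OF c1(1)] w(1) c1(1) by force
    then have "w x \<le> 0" using c1(2) by (simp add: mult_le_0_iff)
    then have wx: "w x = 0" using w(1) by force
    then have "\<And>c. c \<in> C \<Longrightarrow> w c = 0" using e by simp
    then have "sum w (insert x C) = 0" using fin xC wx by simp
    with w(2) show False by simp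
  qed
next
  fix a assume a: "a \<in> insert x C"
  show "a \<notin> pos (insert x C - {a})"
  proof
    assume ap: "a \<in> pos (insert x C - {a})"
    show False
    proof (cases "a = x")
      case True
      then have "insert x C - {a} = C" using xC by auto
      with ap True obtain w where w: "\<forall>c\<in>C. 0 \<le> w c" "x = (\<Sum>c\<in>C. w c *\<^sub>R c)"
        unfolding pos_def by auto
      have "u c3 = w c3" using indep_coeff[OF fin ind _ c3(1), of u w] xs w(2) by simp
      with w(1) c3 show False by force
    next
      case False
      then have aC: "a \<in> C" using a by simp
      have set: "insert x C - {a} = insert x (C - {a})" using False by auto
      from ap obtain w where w: "\<forall>b\<in>insert x (C - {a}). 0 \<le> w b"
          "a = (\<Sum>b\<in>insert x (C - {a}). w b *\<^sub>R b)"
        unfolding pos_def set by auto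
      define d where "d c = (if c = a then 1 else 0::real)" for c
      have lhs: "a = (\<Sum>c\<in>C. d c *\<^sub>R c)"
        proof -
        have "(\<Sum>c\<in>C. d c *\<^sub>R c) = (\<Sum>c\<in>C. if c = a then c else 0)"
          by (rule sum.cong) (auto simp: d_def)
        then show ?thesis using fin aC by simp
      qed
      define e where "e c = w x * u c + (if c = a then 0 else w c)" for c
      have "(\<Sum>b\<in>insert x (C - {a}). w b *\<^sub>R b) = w x *\<^sub>R x + (\<Sum>c\<in>C - {a}. w c *\<^sub>R c)"
        using fin xC by simp
      also have "(\<Sum>c\<in>C - {a}. w c *\<^sub>R c) = (\<Sum>c\<in>C. (if c = a then 0 else w c) *\<^sub>R c)"
        using fin aC by (simp add: sum.remove[OF fin aC])
      also have "w x *\<^sub>R x + (\<Sum>c\<in>C. (if c = a then 0 else w c) *\<^sub>R c) = (\<Sum>c\<in>C. e c *\<^sub>R c)"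
        by (simp add: e_def xs scaleR_sum_right sum.distrib scaleR_add_left)
      finally have rhs: "a = (\<Sum>c\<in>C. e c *\<^sub>R c)" using w(2) by simp
      have de: "\<And>c. c \<in> C \<Longrightarrow> d c = e c" using indep_coeff[OF fin ind _, of d e] lhs rhs by metis
      have "w x * u a = 1" using de[OF aC] by (simp add: d_def e_def)
      moreover have "w x \<ge> 0" using w(1) by simp
      ultimately have wx: "w x > 0" by (cases "w x = 0") auto
      obtain c where c: "c \<in> C" "c \<noteq> a" "u c > 0" using c1 c2 by metis
      have "w x * u c + w c = 0" using de[OF c(1)] c(2) by (simp add: d_def e_def)
      moreover have "w c \<ge> 0" using w(1) c by simp
      moreover have "w x * u c > 0" using wx c(3) by simp
      ultimately show False by linarith
    qed
  qed
qed
lemma block_rel: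
  fixes S :: "'a::euclidean_space set"
  assumes "\<not> affine_dependent S" "0 \<in> rel_interior (convex hull S)"
  shows "\<exists>l. (\<forall>y\<in>S. 0 < l y) \<and> sum l S = 1 \<and> (\<Sum>y\<in>S. l y *\<^sub>R y) = 0"
  using assms rel_interior_convex_hull_explicit[OF assms(1)] by auto

lemma block_indep:
  fixes S :: "'a::real_vector set"
  assumes fin: "finite S" and ad: "\<not> affine_dependent S" and p: "p \<in> S"
    and l: "\<forall>y\<in>S. 0 < l y" "sum l S = 1" "(\<Sum>y\<in>S. l y *\<^sub>R y) = 0"
  shows "independent (S - {p})"
proof
  assume "dependent (S - {p})"
  then obtain m where m: "\<exists>v\<in>S - {p}. m v \<noteq> 0" "(\<Sum>v\<in>S - {p}. m v *\<^sub>R v) = 0"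
    using dependent_finite[of "S - {p}"] fin by auto
  define m' where "m' v = (if v = p then 0 else m v)" for v
  have m'0: "(\<Sum>v\<in>S. m' v *\<^sub>R v) = 0"
  proof -
    have "(\<Sum>v\<in>S. m' v *\<^sub>R v) = m' p *\<^sub>R p + (\<Sum>v\<in>S - {p}. m' v *\<^sub>R v)"
      using sum.remove[OF fin p] by blast
    also have "(\<Sum>v\<in>S - {p}. m' v *\<^sub>R v) = (\<Sum>v\<in>S - {p}. m v *\<^sub>R v)"
      by (rule sum.cong) (auto simp: m'_def)
    finally show ?thesis using m(2) by (simp add: m'_def)
  qed
  define t where "t = sum m' S"
  define U where "U v = m' v - t * l v" for v
  have "sum U S = 0" unfolding U_def t_def
    by (simp add: sum_subtractf sum_distrib_left[symmetric] l(2))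
  moreover have "(\<Sum>v\<in>S. U v *\<^sub>R v) = 0"
    unfolding U_def by (simp add: scaleR_diff_left sum_subtractf m'0
        scaleR_scaleR[symmetric] scaleR_sum_right[symmetric] l(3) del: scaleR_scaleR)
  ultimately have U0: "\<forall>v\<in>S. U v = 0"
    using ad affine_dependent_explicit_finite[OF fin] by auto
  then have "U p = 0" using p by blast
  then have "t * l p = 0" by (simp add: U_def m'_def)
  then have "t = 0" using l(1) p by auto
  then have "\<forall>v\<in>S. m' v = 0" using U0 by (simp add: U_def)
  with m(1) show False unfolding m'_def by (metis DiffE insertI1)
qed

lemma block_span:
  fixes S :: "'a::real_vector set"
  assumes fin: "finite S" and p: "p \<in> S"
    and l: "\<forall>y\<in>S. 0 < l y" "(\<Sum>y\<in>S. l y *\<^sub>R y) = 0"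
  shows "span S \<subseteq> span (S - {p})"
proof -
  have "l p *\<^sub>R p + (\<Sum>y\<in>S - {p}. l y *\<^sub>R y) = 0"
    using sum.remove[OF fin p, of "\<lambda>y. l y *\<^sub>R y"] l(2) by simp
  then have "p = (\<Sum>y\<in>S - {p}. (- l y / l p) *\<^sub>R y)"
  proof -
    assume h: "l p *\<^sub>R p + (\<Sum>y\<in>S - {p}. l y *\<^sub>R y) = 0"
    have lp: "l p > 0" using l(1) p by blast
    have "(\<Sum>y\<in>S - {p}. (- l y / l p) *\<^sub>R y) = (- 1 / l p) *\<^sub>R (\<Sum>y\<in>S - {p}. l y *\<^sub>R y)"
      by (simp add: scaleR_sum_right)
    also have "(\<Sum>y\<in>S - {p}. l y *\<^sub>R y) = - (l p *\<^sub>R p)" using h by (simp add: eq_neg_iff_add_eq_0 add.commute)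
    finally show ?thesis using lp by simp
  qed
  then have "p \<in> span (S - {p})"
    by (metis (no_types, lifting) span_base span_scale span_sum)
  then have "S \<subseteq> span (S - {p})" by (auto intro: span_base)
  then show ?thesis by (metis span_mono span_span)
qed

lemma block_rep_nonneg:
  fixes S :: "'a::real_vector set"
  assumes fin: "finite S" and ne: "S \<noteq> {}"
    and l: "\<forall>y\<in>S. 0 < l y" "(\<Sum>y\<in>S. l y *\<^sub>R y) = 0"
    and v: "v \<in> span S"
  shows "\<exists>p\<in>S. \<exists>a. a p = 0 \<and> (\<forall>y\<in>S. 0 \<le> a y) \<and> v = (\<Sum>y\<in>S. a y *\<^sub>R y)"
proof -
  obtain t where t: "v = (\<Sum>y\<in>S. t y *\<^sub>R y)" using v span_finite[OF fin] by auto
  define m where "m = Min ((\<lambda>y. t y / l y) ` S)"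
  have "m \<in> (\<lambda>y. t y / l y) ` S" unfolding m_def using fin ne by (intro Min_in) auto
  then obtain p where p: "p \<in> S" "m = t p / l p" by auto
  have mle: "\<And>y. y \<in> S \<Longrightarrow> m \<le> t y / l y" unfolding m_def using fin by auto
  define a where "a y = t y - m * l y" for y
  have "l p > 0" using p l(1) by blast
  then have "a p = 0" using p by (simp add: a_def)
  moreover have "\<forall>y\<in>S. 0 \<le> a y"
  proof
    fix y assume y: "y \<in> S"
    have "m \<le> t y / l y" using mle[OF y] .
    then have "m * l y \<le> t y" using l(1) y by (simp add: pos_le_divide_eq)
    then show "0 \<le> a y" by (simp add: a_def)
  qed
  moreover have "v = (\<Sum>y\<in>S. a y *\<^sub>R y)"
    unfolding a_def t by (simp add: scaleR_diff_left sum_subtractf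
        scaleR_scaleR[symmetric] scaleR_sum_right[symmetric] l(2) del: scaleR_scaleR)
  ultimately show ?thesis using p by blast
qed

lemma block_rep_nonpos:
  fixes S :: "'a::real_vector set"
  assumes fin: "finite S" and ne: "S \<noteq> {}"
    and l: "\<forall>y\<in>S. 0 < l y" "(\<Sum>y\<in>S. l y *\<^sub>R y) = 0"
    and v: "v \<in> span S"
  shows "\<exists>p\<in>S. \<exists>a. a p = 0 \<and> (\<forall>y\<in>S. a y \<le> 0) \<and> v = (\<Sum>y\<in>S. a y *\<^sub>R y)"
proof -
  have "- v \<in> span S" using v by (simp add: span_neg)
  from block_rep_nonneg[OF fin ne l this] obtain p a where
    "p \<in> S" "a p = 0" "\<forall>y\<in>S. 0 \<le> a y" "- v = (\<Sum>y\<in>S. a y *\<^sub>R y)" by blast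
  then show ?thesis
    by (intro bexI[of _ p] exI[of _ "\<lambda>y. - a y"]) (auto, metis minus_minus sum_negf)
qed
lemma skel_basis:
  fixes Xs :: "nat \<Rightarrow> 'a::euclidean_space set"
  assumes fin: "\<forall>i<k. finite (Xs i)"
    and ad: "\<forall>i<k. \<not> affine_dependent (Xs i)"
    and ds: "direct_sum_UNIV k (\<lambda>i. span (Xs i))"
    and q: "\<forall>i<k. q i \<in> Xs i"
    and l: "\<forall>i<k. (\<forall>y\<in>Xs i. 0 < l i y) \<and> sum (l i) (Xs i) = 1 \<and> (\<Sum>y\<in>Xs i. l i y *\<^sub>R y) = 0"
    and disj: "\<forall>i<k. \<forall>j<k. i \<noteq> j \<longrightarrow> Xs i \<inter> Xs j = {}"
  shows "independent (\<Union>i<k. Xs i - {q i})" "span (\<Union>i<k. Xs i - {q i}) = UNIV"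
proof -
  let ?C = "\<Union>i<k. Xs i - {q i}"
  have finC: "finite ?C" using fin by auto
  have disj': "\<forall>i\<in>{..<k}. \<forall>j\<in>{..<k}. i \<noteq> j \<longrightarrow> (Xs i - {q i}) \<inter> (Xs j - {q j}) = {}"
    using disj by blast
  show "independent ?C"
  proof
    assume "dependent ?C"
    then obtain m where m: "\<exists>v\<in>?C. m v \<noteq> 0" "(\<Sum>v\<in>?C. m v *\<^sub>R v) = 0"
      using dependent_finite[OF finC] by auto
    define g where "g i = (if i < k then (\<Sum>v\<in>Xs i - {q i}. m v *\<^sub>R v) else 0)" for i
    have "(\<Sum>v\<in>?C. m v *\<^sub>R v) = (\<Sum>i<k. \<Sum>v\<in>Xs i - {q i}. m v *\<^sub>R v)"
      by (rule sum.UNION_disjoint) (use fin disj' in auto)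
    then have g0: "(0::'a) = (\<Sum>i<k. g i)" using m(2) by (simp add: g_def)
    have gs: "\<forall>i<k. g i \<in> span (Xs i)"
    proof (intro allI impI)
      fix i assume i: "i < k"
      have "\<forall>v\<in>Xs i - {q i}. m v *\<^sub>R v \<in> span (Xs i)"
        by (meson DiffD1 span_base span_scale)
      then show "g i \<in> span (Xs i)" unfolding g_def using i by simp (intro span_sum, blast)
    qed
    have gk: "\<forall>i\<ge>k. g i = 0" by (simp add: g_def)
    let ?P = "\<lambda>f. (\<forall>i<k. f i \<in> span (Xs i)) \<and> (\<forall>i\<ge>k. f i = 0) \<and> (0::'a) = (\<Sum>i<k. f i)"
    from ds have "\<exists>!f. ?P f"
      unfolding direct_sum_UNIV_def by (rule allE)
    then obtain f0 where f0: "\<And>f. ?P f \<Longrightarrow> f = f0" by (metis ex1E)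
    have "?P (\<lambda>_. 0)" by (simp add: span_zero)
    then have z: "(\<lambda>_. 0) = f0" by (rule f0)
    have "?P g" using gs gk g0 by (intro conjI)
    then have "g = f0" by (rule f0)
    then have gz0: "\<And>i. g i = 0" using z by (metis)
    have gz: "\<And>i. i < k \<Longrightarrow> (\<Sum>v\<in>Xs i - {q i}. m v *\<^sub>R v) = 0"
      using gz0 unfolding g_def by (metis (full_types))
    from m(1) obtain i v where iv: "i < k" "v \<in> Xs i - {q i}" "m v \<noteq> 0" by auto
    have "independent (Xs i - {q i})"
      using block_indep[of "Xs i" "q i" "l i"] fin ad q l iv(1) by auto
    moreover have "dependent (Xs i - {q i})"
      using dependent_finite[of "Xs i - {q i}"] fin iv gz by auto
    ultimately show False by simp
  qed
  show "span ?C = UNIV"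
  proof (rule set_eqI, rule iffI)
    fix v :: 'a assume "v \<in> UNIV"
    from ds obtain f where f: "\<forall>i<k. f i \<in> span (Xs i)" "v = (\<Sum>i<k. f i)"
      unfolding direct_sum_UNIV_def by blast
    have "\<forall>i<k. f i \<in> span ?C"
    proof (intro allI impI)
      fix i assume i: "i < k"
      have "span (Xs i) \<subseteq> span (Xs i - {q i})"
        using block_span[of "Xs i" "q i" "l i"] fin q l i by auto
      also have "\<dots> \<subseteq> span ?C" by (rule span_mono) (use i in auto)
      finally show "f i \<in> span ?C" using f(1) i by auto
    qed
    then show "v \<in> span ?C" unfolding f(2) by (intro span_sum) blast
  qed simp
qed
lemma blk_eq:
  assumes disj: "\<forall>i<k. \<forall>j<k. i \<noteq> j \<longrightarrow> Xs i \<inter> Xs j = {}" and "i < k" "c \<in> Xs i"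
  shows "(THE j. j < k \<and> c \<in> Xs j) = i"
  using assms by (intro the_equality) auto

lemma skel_sum:
  fixes Xs :: "nat \<Rightarrow> 'a::real_vector set"
  assumes fin: "\<forall>i<k. finite (Xs i)"
    and disj: "\<forall>i<k. \<forall>j<k. i \<noteq> j \<longrightarrow> Xs i \<inter> Xs j = {}"
    and q: "\<forall>i<k. q i \<in> Xs i" and w: "\<forall>i<k. w i (q i) = 0"
  shows "(\<Sum>c\<in>(\<Union>i<k. Xs i - {q i}). w (THE j. j < k \<and> c \<in> Xs j) c *\<^sub>R c)
         = (\<Sum>i<k. \<Sum>y\<in>Xs i. w i y *\<^sub>R y)"
proof -
  have disj': "\<forall>i\<in>{..<k}. \<forall>j\<in>{..<k}. i \<noteq> j \<longrightarrow> (Xs i - {q i}) \<inter> (Xs j - {q j}) = {}"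
    using disj by blast
  have "(\<Sum>c\<in>(\<Union>i<k. Xs i - {q i}). w (THE j. j < k \<and> c \<in> Xs j) c *\<^sub>R c)
      = (\<Sum>i<k. \<Sum>c\<in>Xs i - {q i}. w (THE j. j < k \<and> c \<in> Xs j) c *\<^sub>R c)"
    by (rule sum.UNION_disjoint) (use fin disj' in auto)
  also have "\<dots> = (\<Sum>i<k. \<Sum>y\<in>Xs i. w i y *\<^sub>R y)"
  proof (rule sum.cong[OF refl])
    fix i assume "i \<in> {..<k}"
    then have i: "i < k" by simp
    have "(\<Sum>c\<in>Xs i - {q i}. w (THE j. j < k \<and> c \<in> Xs j) c *\<^sub>R c) = (\<Sum>c\<in>Xs i - {q i}. w i c *\<^sub>R c)"
      by (rule sum.cong[OF refl]) (use blk_eq[OF disj i] in auto)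
    also have "\<dots> = (\<Sum>y\<in>Xs i. w i y *\<^sub>R y)"
      using sum.remove[of "Xs i" "q i" "\<lambda>y. w i y *\<^sub>R y"] fin q w i by simp
    finally show "(\<Sum>c\<in>Xs i - {q i}. w (THE j. j < k \<and> c \<in> Xs j) c *\<^sub>R c) = (\<Sum>y\<in>Xs i. w i y *\<^sub>R y)" .
  qed
  finally show ?thesis .
qed

lemma contra:
  fixes X :: "'a::euclidean_space set" and Xs :: "nat \<Rightarrow> 'a set"
  assumes ss: "standing_setting X" and sk: "skeleton X k Xs" and xX: "x \<in> X"
    and xsp: "\<forall>i<k. x \<notin> span (Xs i)"
    and l: "\<forall>i<k. (\<forall>y\<in>Xs i. 0 < l i y) \<and> sum (l i) (Xs i) = 1 \<and> (\<Sum>y\<in>Xs i. l i y *\<^sub>R y) = 0"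
    and q: "\<forall>i<k. q i \<in> Xs i" and w0: "\<forall>i<k. w i (q i) = 0"
    and xf: "x = (\<Sum>i<k. \<Sum>y\<in>Xs i. w i y *\<^sub>R y)"
    and b: "b1 < k" "b2 < k" "b3 < k"
    and y: "y1 \<in> Xs b1" "y2 \<in> Xs b2" "y3 \<in> Xs b3" "y1 \<noteq> y2"
    and pos: "w b1 y1 > 0" "w b2 y2 > 0" "w b3 y3 < 0"
  shows False
proof -
  from ss have finX: "finite X" and gp: "\<forall>A. A \<subseteq> X \<and> card A = DIM('a) + 1 \<longrightarrow> good_position A"
    unfolding standing_setting_def by auto
  from sk have sub: "\<forall>i<k. Xs i \<subseteq> X"
    and disj: "\<forall>i<k. \<forall>j<k. i \<noteq> j \<longrightarrow> Xs i \<inter> Xs j = {}"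
    and ad: "\<forall>i<k. \<not> affine_dependent (Xs i)"
    and ds: "direct_sum_UNIV k (\<lambda>i. span (Xs i))"
    unfolding skeleton_def by auto
  have fin: "\<forall>i<k. finite (Xs i)" using sub finX finite_subset by blast
  define C where "C = (\<Union>i<k. Xs i - {q i})"
  define u where "u c = w (THE j. j < k \<and> c \<in> Xs j) c" for c
  have finC: "finite C" unfolding C_def using fin by auto
  have ind: "independent C" and spC: "span C = UNIV"
    unfolding C_def using skel_basis[OF fin ad ds q l disj] by auto
  have "card C = DIM('a)"
    using dim_eq_card_independent[OF ind] spC dim_span[of C] dim_UNIV by metis
  have CX: "C \<subseteq> X" unfolding C_def using sub by auto
  have xC: "x \<notin> C"
  proof
    assume "x \<in> C"
    then obtain i where "i < k" "x \<in> Xs i" unfolding C_def by auto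
    then show False using xsp span_base by blast
  qed
  have xs: "x = (\<Sum>c\<in>C. u c *\<^sub>R c)"
    unfolding xf C_def u_def using skel_sum[of k Xs q w, OF fin disj q w0] by simp
  have memC: "\<And>b yy. b < k \<Longrightarrow> yy \<in> Xs b \<Longrightarrow> w b yy \<noteq> 0 \<Longrightarrow> yy \<in> C \<and> u yy = w b yy"
  proof -
    fix b yy assume "b < k" "yy \<in> Xs b" "w b yy \<noteq> 0"
    moreover then have "yy \<noteq> q b" using w0 by auto
    ultimately show "yy \<in> C \<and> u yy = w b yy"
      unfolding C_def u_def using blk_eq[OF disj] by auto
  qed
  have "conical_position (insert x C)"
    using conical_L[OF finC ind xC xs, of y1 y2 y3] memC[OF b(1) y(1)] memC[OF b(2) y(2)]
      memC[OF b(3) y(3)] pos y(4) by auto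
  moreover have "good_position (insert x C)"
    using gp CX xX finC xC \<open>card C = DIM('a)\<close> by auto
  ultimately show False unfolding good_position_def by simp
qed
theorem proposition5p1:
  fixes X :: "'a::euclidean_space set" and Xs :: "nat \<Rightarrow> 'a set" and k :: nat and x :: 'a
  assumes "standing_setting X"
    and "skeleton X k Xs"
    and "x \<in> X"
    and "\<forall>i<k. x \<notin> span (Xs i)"
  shows "\<exists>i<k. \<exists>j<k. i \<noteq> j \<and> (\<exists>xi\<in>Xs i. \<exists>xj\<in>Xs j. x \<in> pos {xi, xj})"
proof -
  note ss = assms(1) and sk = assms(2) and xX = assms(3) and xsp = assms(4)
  from ss have finX: "finite X" and X0: "0 \<notin> X"
    unfolding standing_setting_def by auto
  from sk have sub: "\<forall>i<k. Xs i \<subseteq> X"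
    and disj: "\<forall>i<k. \<forall>j<k. i \<noteq> j \<longrightarrow> Xs i \<inter> Xs j = {}"
    and ne: "\<forall>i<k. Xs i \<noteq> {}"
    and ad: "\<forall>i<k. \<not> affine_dependent (Xs i)"
    and ri: "\<forall>i<k. 0 \<in> rel_interior (convex hull (Xs i))"
    and ds: "direct_sum_UNIV k (\<lambda>i. span (Xs i))"
    unfolding skeleton_def by auto
  have fin: "\<forall>i<k. finite (Xs i)" using sub finX finite_subset by blast
  have "\<forall>i. \<exists>li. i < k \<longrightarrow> (\<forall>y\<in>Xs i. 0 < li y) \<and> sum li (Xs i) = 1 \<and> (\<Sum>y\<in>Xs i. li y *\<^sub>R y) = 0"
  proof
    fix i show "\<exists>li. i < k \<longrightarrow> (\<forall>y\<in>Xs i. 0 < li y) \<and> sum li (Xs i) = 1 \<and> (\<Sum>y\<in>Xs i. li y *\<^sub>R y) = 0"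
    proof (cases "i < k")
      case True
      then show ?thesis using block_rel[of "Xs i"] ad ri by simp
    qed simp
  qed
  from choice[OF this] obtain l where l: "\<forall>i<k. (\<forall>y\<in>Xs i. 0 < l i y) \<and> sum (l i) (Xs i) = 1 \<and> (\<Sum>y\<in>Xs i. l i y *\<^sub>R y) = 0"
    ..
  from ds obtain f where f: "\<forall>i<k. f i \<in> span (Xs i)" "x = (\<Sum>i<k. f i)"
    unfolding direct_sum_UNIV_def by blast
  have "\<forall>i. \<exists>pa. i < k \<longrightarrow> fst pa \<in> Xs i \<and> snd pa (fst pa) = 0 \<and> (\<forall>y\<in>Xs i. 0 \<le> snd pa y) \<and> f i = (\<Sum>y\<in>Xs i. snd pa y *\<^sub>R y)"
  proof
    fix i show "\<exists>pa. i < k \<longrightarrow> fst pa \<in> Xs i \<and> snd pa (fst pa) = 0 \<and> (\<forall>y\<in>Xs i. 0 \<le> snd pa y) \<and> f i = (\<Sum>y\<in>Xs i. snd pa y *\<^sub>R y)"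
    proof (cases "i < k")
      case True
      have "\<exists>p\<in>Xs i. \<exists>a. a p = 0 \<and> (\<forall>y\<in>Xs i. 0 \<le> a y) \<and> f i = (\<Sum>y\<in>Xs i. a y *\<^sub>R y)"
        by (rule block_rep_nonneg) (use fin ne l f True in auto)
      then obtain p a where "p \<in> Xs i" "a p = 0" "\<forall>y\<in>Xs i. 0 \<le> a y" "f i = (\<Sum>y\<in>Xs i. a y *\<^sub>R y)"
        by blast
      then show ?thesis by (intro exI[of _ "(p, a)"]) simp
    qed simp
  qed
  from choice[OF this] obtain PA where PA: "\<forall>i<k. fst (PA i) \<in> Xs i \<and> snd (PA i) (fst (PA i)) = 0 \<and> (\<forall>y\<in>Xs i. 0 \<le> snd (PA i) y) \<and> f i = (\<Sum>y\<in>Xs i. snd (PA i) y *\<^sub>R y)"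
    ..
  have "\<forall>i. \<exists>pa. i < k \<longrightarrow> fst pa \<in> Xs i \<and> snd pa (fst pa) = 0 \<and> (\<forall>y\<in>Xs i. snd pa y \<le> 0) \<and> f i = (\<Sum>y\<in>Xs i. snd pa y *\<^sub>R y)"
  proof
    fix i show "\<exists>pa. i < k \<longrightarrow> fst pa \<in> Xs i \<and> snd pa (fst pa) = 0 \<and> (\<forall>y\<in>Xs i. snd pa y \<le> 0) \<and> f i = (\<Sum>y\<in>Xs i. snd pa y *\<^sub>R y)"
    proof (cases "i < k")
      case True
      have "\<exists>p\<in>Xs i. \<exists>a. a p = 0 \<and> (\<forall>y\<in>Xs i. a y \<le> 0) \<and> f i = (\<Sum>y\<in>Xs i. a y *\<^sub>R y)"
        by (rule block_rep_nonpos) (use fin ne l f True in auto)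
      then obtain p a where "p \<in> Xs i" "a p = 0" "\<forall>y\<in>Xs i. a y \<le> 0" "f i = (\<Sum>y\<in>Xs i. a y *\<^sub>R y)"
        by blast
      then show ?thesis by (intro exI[of _ "(p, a)"]) simp
    qed simp
  qed
  from choice[OF this] obtain NA where NA: "\<forall>i<k. fst (NA i) \<in> Xs i \<and> snd (NA i) (fst (NA i)) = 0 \<and> (\<forall>y\<in>Xs i. snd (NA i) y \<le> 0) \<and> f i = (\<Sum>y\<in>Xs i. snd (NA i) y *\<^sub>R y)"
    ..
  define amin where "amin i = snd (PA i)" for i
  define amax where "amax i = snd (NA i)" for i
  have core: "False" if b: "b1 < k" "b2 < k" "b3 < k" "b3 \<noteq> b1" "b3 \<noteq> b2"
    and y: "y1 \<in> Xs b1" "y2 \<in> Xs b2" "y3 \<in> Xs b3" "y1 \<noteq> y2"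
    and pos: "amin b1 y1 > 0" "amin b2 y2 > 0" "amax b3 y3 < 0" for b1 b2 b3 y1 y2 y3
  proof -
    define q where "q i = (if i = b1 \<or> i = b2 then fst (PA i) else fst (NA i))" for i
    define w where "w i = (if i = b1 \<or> i = b2 then amin i else amax i)" for i
    have q: "\<forall>i<k. q i \<in> Xs i" using PA NA by (simp add: q_def)
    have w0: "\<forall>i<k. w i (q i) = 0" using PA NA by (simp add: q_def w_def amin_def amax_def)
    have "\<forall>i<k. f i = (\<Sum>y\<in>Xs i. w i y *\<^sub>R y)" using PA NA by (simp add: w_def amin_def amax_def)
    then have xf: "x = (\<Sum>i<k. \<Sum>y\<in>Xs i. w i y *\<^sub>R y)" using f(2) by simp
    show False
      using contra[OF ss sk xX xsp l q w0 xf b(1,2,3) y] pos b(4,5) by (simp add: w_def)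
  qed
  have posex: "\<exists>y\<in>Xs i. amin i y > 0" if "i < k" "f i \<noteq> 0" for i
  proof (rule ccontr)
    assume "\<not> ?thesis"
    then have "\<forall>y\<in>Xs i. amin i y = 0" using PA that(1) by (force simp: amin_def)
    then have "f i = 0" using PA that(1) by (simp add: amin_def)
    with that show False by simp
  qed
  have negex: "\<exists>y\<in>Xs i. amax i y < 0" if "i < k" "f i \<noteq> 0" for i
  proof (rule ccontr)
    assume "\<not> ?thesis"
    then have "\<forall>y\<in>Xs i. amax i y = 0" using NA that(1) by (force simp: amax_def)
    then have "f i = 0" using NA that(1) by (simp add: amax_def)
    with that show False by simp
  qed
  obtain i j where ij: "i < k" "j < k" "i \<noteq> j" "f i \<noteq> 0" "f j \<noteq> 0"
  proof -
    have "\<exists>i j. i < k \<and> j < k \<and> i \<noteq> j \<and> f i \<noteq> 0 \<and> f j \<noteq> 0"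
    proof (rule ccontr)
      assume H: "\<not> ?thesis"
      show False
      proof (cases "\<exists>i0<k. f i0 \<noteq> 0")
        case True
        then obtain i0 where i0: "i0 < k" "f i0 \<noteq> 0" by blast
        have "\<forall>i\<in>{..<k} - {i0}. f i = 0" using H i0 by blast
        then have "x = f i0" using f(2) sum.remove[of "{..<k}" i0 f] i0(1) by simp
        then show False using xsp f(1) i0(1) by metis
      next
        case False
        then have "x = 0" using f(2) by simp
        then show False using X0 xX by simp
      qed
    qed
    then show ?thesis using that by blast
  qed
  obtain yi where yi: "yi \<in> Xs i" "amin i yi > 0" using posex ij by blast
  obtain yj where yj: "yj \<in> Xs j" "amin j yj > 0" using posex ij by blast
  have yij: "yi \<noteq> yj" using disj ij yi yj by blast
  have uni: "\<And>y. y \<in> Xs i \<Longrightarrow> amin i y > 0 \<Longrightarrow> y = yi"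
  proof (rule ccontr)
    fix y assume "y \<in> Xs i" "amin i y > 0" "y \<noteq> yi"
    moreover obtain y3 where "y3 \<in> Xs j" "amax j y3 < 0" using negex ij by blast
    ultimately show False using core[of i i j y yi y3] ij yi by auto
  qed
  have unj: "\<And>y. y \<in> Xs j \<Longrightarrow> amin j y > 0 \<Longrightarrow> y = yj"
  proof (rule ccontr)
    fix y assume "y \<in> Xs j" "amin j y > 0" "y \<noteq> yj"
    moreover obtain y3 where "y3 \<in> Xs i" "amax i y3 < 0" using negex ij by blast
    ultimately show False using core[of j j i y yj y3] ij yj by auto
  qed
  have others: "\<And>m. m < k \<Longrightarrow> m \<noteq> i \<Longrightarrow> m \<noteq> j \<Longrightarrow> f m = 0"
  proof (rule ccontr)
    fix m assume m: "m < k" "m \<noteq> i" "m \<noteq> j" "f m \<noteq> 0"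
    then obtain y3 where "y3 \<in> Xs m" "amax m y3 < 0" using negex by blast
    then show False using core[of i j m yi yj y3] ij m yi yj yij by auto
  qed
  have single: "f b = amin b yb *\<^sub>R yb"
    if b: "b < k" "yb \<in> Xs b" and un: "\<And>y. y \<in> Xs b \<Longrightarrow> amin b y > 0 \<Longrightarrow> y = yb" for b yb
  proof -
    have nn: "\<forall>y\<in>Xs b. 0 \<le> amin b y" using PA b(1) by (simp add: amin_def)
    have "f b = (\<Sum>y\<in>Xs b. amin b y *\<^sub>R y)" using PA b(1) by (simp add: amin_def)
    also have "\<dots> = (\<Sum>y\<in>Xs b. if y = yb then amin b y *\<^sub>R y else 0)"
    proof (rule sum.cong[OF refl])
      fix y assume y: "y \<in> Xs b"
      show "amin b y *\<^sub>R y = (if y = yb then amin b y *\<^sub>R y else 0)"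
      proof (cases "y = yb")
        case False
        then have "\<not> amin b y > 0" using un y by blast
        then have "amin b y = 0" using nn y by force
        then show ?thesis using False by simp
      qed simp
    qed
    also have "\<dots> = amin b yb *\<^sub>R yb" using fin b by simp
    finally show ?thesis .
  qed
  have "x = f i + f j"
  proof -
    have "x = f i + (\<Sum>m\<in>{..<k} - {i}. f m)" using f(2) sum.remove[of "{..<k}" i f] ij by simp
    also have "(\<Sum>m\<in>{..<k} - {i}. f m) = f j + (\<Sum>m\<in>{..<k} - {i} - {j}. f m)"
      using sum.remove[of "{..<k} - {i}" j f] ij by simp
    also have "(\<Sum>m\<in>{..<k} - {i} - {j}. f m) = 0" using others by (intro sum.neutral) auto
    finally show ?thesis by simp
  qed
  then have xe: "x = amin i yi *\<^sub>R yi + amin j yj *\<^sub>R yj"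
    using single[OF ij(1) yi(1) uni] single[OF ij(2) yj(1) unj] by simp
  have "x \<in> pos {yi, yj}"
    unfolding pos_def
    using xe yi(2) yj(2) yij
    by (intro CollectI exI[of _ "\<lambda>y. if y = yi then amin i yi else amin j yj"]) auto
  then show ?thesis using ij yi yj by blast
qed
end
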